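(* Let $\mathcal G$ be an undirected connected graph on the agent set $\mathcal V=\{1,\dots,N\}$ with symmetric nonnegative weights $a_{ij}=a_{ji}$, where $a_{ij}>0$ if and only if $j\in\mathcal N_i$ (the neighbor set of $i$), and let $L$ be its weighted Laplacian ($l_{ij}=-a_{ij}$ for $i\ne j$, $l_{ii}=\sum_{j\ne i}a_{ij}$), with $\lambda_2>0$ its smallest nonzero eigenvalue. Fix a common amplitude $A_{\rm m}>0$ and, for each ordered pair $(i,j)$ with $j\in\mathcal N_i$, a constant frequency $\omega_{ij}$ (chosen at random by agent $i$), and set $s_{ij}(t)=A_{\rm m}\sin(\omega_{ij}t)$. Each agent forms the masking signal $m_i(t)=\sum_{j\in\mathcal N_i}\big(s_{ji}(t)-s_{ij}(t)\big)$ and the masked reference $z_{{\rm m},i}(t)=z_i(t)+m_i(t)$, where $z_i:[0,\infty)\to\mathbb R$ is its continuously differentiable reference signal with bounded derivative $\dot z_i$. For a gain $\beta>0$, each agent runs $$\dot{\hat z}_{{\rm a},i}(t)=\dot z_{{\rm m},i}(t)-\beta\sum_{j=1}^N a_{ij}\big(\hat z_{{\rm a},i}(t)-\hat z_{{\rm a},j}(t)\big),\qquad \hat z_{{\rm a},i}(0)=z_i(0)+m_i(0).$$ Then each estimate $\hat z_{{\rm a},i}(t)$ tracks the true average $\frac1N\mathbf 1_N^{\rm T}z(t)$, where $z(t)=[z_1(t)\,\cdots\,z_N(t)]^{\rm T}$, with a bounded steady-state deviation that decreases as $\beta$ increases; precisely, there is a constant $c\ge 0$ depending on the reference signals, the masking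 signals and the graph but not on $\beta$, such that for every $\beta>0$ and every $i\in\mathcal V$, $$\limsup_{t\to\infty}\Big|\hat z_{{\rm a},i}(t)-\tfrac1N\mathbf 1_N^{\rm T}z(t)\Big|\le \frac{c}{\beta}.$$
   Context: $\mathbf 1_N$ denotes the all-ones vector in $\mathbb R^N$. The signal $s_{ij}$ is generated by agent $i$ and sent to neighbor $j$; hence $m_i$ uses the signals $s_{ji}$ received from neighbors and the signals $s_{ij}$ sent to them. *)

theory Defs
  imports "HOL-Analysis.Analysis"
begin

text \<open>Agents are indexed by 0..N-1 (the paper's 1..N). Weights a i j.\<close>

definition nbrs :: "nat \<Rightarrow> (nat \<Rightarrow> nat \<Rightarrow> real) \<Rightarrow> nat \<Rightarrow> nat set" where
  "nbrs N a i = {j. j < N \<and> a i j > 0}"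

definition graph_edges :: "nat \<Rightarrow> (nat \<Rightarrow> nat \<Rightarrow> real) \<Rightarrow> (nat \<times> nat) set" where
  "graph_edges N a = {(i, j). i < N \<and> j < N \<and> a i j > 0}"

definition connected_graph :: "nat \<Rightarrow> (nat \<Rightarrow> nat \<Rightarrow> real) \<Rightarrow> bool" where
  "connected_graph N a \<longleftrightarrow> (\<forall>i<N. \<forall>j<N. (i, j) \<in> (graph_edges N a)\<^sup>*)"

definition laplacian :: "nat \<Rightarrow> (nat \<Rightarrow> nat \<Rightarrow> real) \<Rightarrow> nat \<Rightarrow> nat \<Rightarrow> real" where
  "laplacian N a i j = (if i = j then (\<Sum>k\<in>{k. k < N \<and> k \<noteq> i}. a i k) else - a i j)"

definition sig :: "real \<Rightarrow> (nat \<Rightarrow> nat \<Rightarrow> real) \<Rightarrow> nat \<Rightarrow> nat \<Rightarrow> real \<Rightarrow> real" where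
  "sig Am \<omega> i j t = Am * sin (\<omega> i j * t)"

definition mask :: "nat \<Rightarrow> (nat \<Rightarrow> nat \<Rightarrow> real) \<Rightarrow> real \<Rightarrow> (nat \<Rightarrow> nat \<Rightarrow> real) \<Rightarrow> nat \<Rightarrow> real \<Rightarrow> real" where
  "mask N a Am \<omega> i t = (\<Sum>j\<in>nbrs N a i. sig Am \<omega> j i t - sig Am \<omega> i j t)"

end

theory Submission imports Defs "HOL-Real_Asymp.Real_Asymp" begin

lemma decr0:
  fixes f f' :: "real \<Rightarrow> real"
  assumes d: "\<And>t. t \<ge> 0 \<Longrightarrow> (f has_real_derivative f' t) (at t within {0..})"
    and n: "\<And>t. t \<ge> 0 \<Longrightarrow> f' t \<le> 0" and t: "t \<ge> 0"
  shows "f t \<le> f 0"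
proof (rule DERIV_nonpos_imp_decreasing_open[OF t])
  fix x :: real assume x: "0 < x" "x < t"
  have "interior {0::real..} = {0<..}" by simp
  hence "at x within {0..} = at x" using x by (intro at_within_interior) auto
  thus "\<exists>y. (f has_real_derivative y) (at x) \<and> y \<le> 0" using d[of x] n[of x] x by auto
next
  have "continuous_on {0..} f"
    unfolding continuous_on_eq_continuous_within
    using d by (auto intro: DERIV_continuous)
  thus "continuous_on {0..t} f" by (rule continuous_on_subset) auto
qed

lemma pathK:
  fixes a :: "nat \<Rightarrow> nat \<Rightarrow> real"
  assumes a_nonneg: "\<And>i j. i < N \<Longrightarrow> j < N \<Longrightarrow> a i j \<ge> 0"
    and p: "(i, j) \<in> (graph_edges N a)\<^sup>*"
  shows "\<exists>K\<ge>0. \<forall>x::nat\<Rightarrow>real. (x i - x j)^2 \<le> K * (\<Sum>u<N. \<Sum>v<N. a u v * (x u - x v)^2)"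
  using p
proof (induction rule: rtrancl_induct)
  case base
  then show ?case by (intro exI[of _ 0]) auto
next
  case (step k j)
  then obtain K where K: "K \<ge> 0" "\<And>x::nat\<Rightarrow>real. (x i - x k)^2 \<le> K * (\<Sum>u<N. \<Sum>v<N. a u v * (x u - x v)^2)"
    by blast
  from step(2) have kj: "k < N" "j < N" "a k j > 0" by (auto simp: graph_edges_def)
  show ?case
  proof (intro exI[of _ "2*K + 2 / a k j"] conjI allI)
    show "0 \<le> 2*K + 2 / a k j" using K kj by auto
    fix x :: "nat \<Rightarrow> real"
    define Q where "Q = (\<Sum>u<N. \<Sum>v<N. a u v * (x u - x v)^2)"
    have t1: "a k j * (x k - x j)^2 \<le> (\<Sum>v<N. a k v * (x k - x v)^2)"
      by (rule member_le_sum[where f="\<lambda>v. a k v * (x k - x v)^2"]) (use kj a_nonneg in auto)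
    also have "\<dots> \<le> Q" unfolding Q_def
      by (rule member_le_sum[where f="\<lambda>u. \<Sum>v<N. a u v * (x u - x v)^2"]) (use kj a_nonneg in \<open>auto intro!: sum_nonneg\<close>)
    finally have "(x k - x j)^2 \<le> Q / a k j" using kj by (simp add: field_simps)
    moreover have "(x i - x j)^2 \<le> 2*(x i - x k)^2 + 2*(x k - x j)^2"
      by (smt (verit) sum_squares_bound power2_diff power2_sum)
    moreover have "(x i - x k)^2 \<le> K * Q" using K(2) unfolding Q_def by blast
    moreover have "(2*K + 2/a k j)*Q = 2*(K*Q) + 2*(Q/a k j)" by (simp add: algebra_simps)
    ultimately show "(x i - x j)^2 \<le> (2*K + 2 / a k j) * Q"
      by linarith
  qed
qed

lemma sumsq_pairs:
  fixes x :: "nat \<Rightarrow> real"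
  shows "(\<Sum>i<N. \<Sum>j<N. (x i - x j)^2) = 2 * real N * (\<Sum>i<N. (x i)^2) - 2 * (\<Sum>i<N. x i)^2"
proof -
  have "(\<Sum>i<N. \<Sum>j<N. (x i - x j)^2) = (\<Sum>i<N. \<Sum>j<N. (x i)^2 + (x j)^2 - 2 * x i * x j)"
    by (simp add: power2_diff)
  also have "\<dots> = (\<Sum>i<N. real N * (x i)^2 + (\<Sum>j<N. (x j)^2) - 2 * x i * (\<Sum>j<N. x j))"
    by (simp add: sum.distrib sum_subtractf sum_distrib_left mult.assoc)
  also have "\<dots> = 2 * real N * (\<Sum>i<N. (x i)^2) - 2 * (\<Sum>i<N. x i)^2"
    by (simp add: sum.distrib sum_subtractf sum_distrib_left[symmetric] sum_distrib_right[symmetric] power2_eq_square algebra_simps)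
  finally show ?thesis .
qed

lemma quad_form:
  fixes x :: "nat \<Rightarrow> real" and a :: "nat \<Rightarrow> nat \<Rightarrow> real"
  assumes a_sym: "\<And>i j. i < N \<Longrightarrow> j < N \<Longrightarrow> a i j = a j i"
  shows "(\<Sum>u<N. \<Sum>v<N. a u v * (x u - x v)^2) = 2 * (\<Sum>i<N. x i * (\<Sum>j<N. a i j * (x i - x j)))"
proof -
  have "(\<Sum>i<N. x i * (\<Sum>j<N. a i j * (x i - x j))) = (\<Sum>i<N. \<Sum>j<N. a i j * x i * (x i - x j))"
    by (simp add: sum_distrib_left mult.assoc mult.left_commute)
  also have "\<dots> = (\<Sum>j<N. \<Sum>i<N. a i j * x i * (x i - x j))" by (rule sum.swap)
  also have "\<dots> = (\<Sum>j<N. \<Sum>i<N. a j i * x i * (x i - x j))"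
    by (intro sum.cong refl) (simp add: a_sym)
  finally have e: "(\<Sum>i<N. x i * (\<Sum>j<N. a i j * (x i - x j))) = (\<Sum>u<N. \<Sum>v<N. a u v * x v * (x v - x u))"
    by simp
  have "(\<Sum>u<N. \<Sum>v<N. a u v * (x u - x v)^2) = (\<Sum>u<N. \<Sum>v<N. a u v * x u * (x u - x v) + a u v * x v * (x v - x u))"
    by (intro sum.cong refl) (simp add: power2_eq_square algebra_simps)
  also have "\<dots> = (\<Sum>u<N. \<Sum>v<N. a u v * x u * (x u - x v)) + (\<Sum>u<N. \<Sum>v<N. a u v * x v * (x v - x u))"
    by (simp add: sum.distrib)
  also have "(\<Sum>u<N. \<Sum>v<N. a u v * x u * (x u - x v)) = (\<Sum>i<N. x i * (\<Sum>j<N. a i j * (x i - x j)))"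
    by (simp add: sum_distrib_left mult.assoc mult.left_commute)
  finally show ?thesis using e by simp
qed

lemma gap:
  fixes a :: "nat \<Rightarrow> nat \<Rightarrow> real"
  assumes N_pos: "0 < N"
    and a_sym: "\<And>i j. i < N \<Longrightarrow> j < N \<Longrightarrow> a i j = a j i"
    and a_nonneg: "\<And>i j. i < N \<Longrightarrow> j < N \<Longrightarrow> a i j \<ge> 0"
    and conn: "connected_graph N a"
  shows "\<exists>l>0. \<forall>x::nat\<Rightarrow>real. (\<Sum>i<N. x i) = 0 \<longrightarrow>
           l * (\<Sum>i<N. (x i)^2) \<le> (\<Sum>i<N. x i * (\<Sum>j<N. a i j * (x i - x j)))"
proof -
  define Q where "Q = (\<lambda>x::nat\<Rightarrow>real. \<Sum>u<N. \<Sum>v<N. a u v * (x u - x v)^2)"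
  have "\<forall>p\<in>{..<N}\<times>{..<N}. \<exists>K\<ge>0. \<forall>x::nat\<Rightarrow>real. (x (fst p) - x (snd p))^2 \<le> K * Q x"
    using pathK[OF a_nonneg] conn unfolding connected_graph_def Q_def by auto
  then obtain K where K: "\<And>p. p \<in> {..<N}\<times>{..<N} \<Longrightarrow> K p \<ge> 0 \<and> (\<forall>x::nat\<Rightarrow>real. (x (fst p) - x (snd p))^2 \<le> K p * Q x)"
    by metis
  define Kt where "Kt = (\<Sum>i<N. \<Sum>j<N. K (i, j))"
  have Kt0: "Kt \<ge> 0" unfolding Kt_def using K by (auto intro!: sum_nonneg)
  show ?thesis
  proof (intro exI[of _ "real N / (Kt + 1)"] conjI allI impI)
    show "0 < real N / (Kt + 1)" using N_pos Kt0 by auto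
    fix x :: "nat \<Rightarrow> real"
    assume s0: "(\<Sum>i<N. x i) = 0"
    define L where "L = (\<Sum>i<N. x i * (\<Sum>j<N. a i j * (x i - x j)))"
    have QL: "Q x = 2 * L" unfolding Q_def L_def by (rule quad_form[OF a_sym])
    have Q0: "Q x \<ge> 0" unfolding Q_def using a_nonneg by (auto intro!: sum_nonneg)
    have "(\<Sum>i<N. \<Sum>j<N. (x i - x j)^2) \<le> (\<Sum>i<N. \<Sum>j<N. K (i, j) * Q x)"
      using K by (intro sum_mono) fastforce
    also have "\<dots> = Kt * Q x" unfolding Kt_def by (simp add: sum_distrib_right)
    finally have "2 * real N * (\<Sum>i<N. (x i)^2) \<le> Kt * (2 * L)"
      using sumsq_pairs[of x N] s0 QL by simp
    hence "real N * (\<Sum>i<N. (x i)^2) \<le> Kt * L" by simp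
    also have "\<dots> \<le> (Kt + 1) * L" using Q0 QL by (simp add: algebra_simps)
    finally have "real N * (\<Sum>i<N. (x i)^2) \<le> (Kt + 1) * L" .
    thus "real N / (Kt + 1) * (\<Sum>i<N. (x i)^2) \<le> L" using Kt0
      by (simp add: field_simps)
  qed
qed

lemma mask_sum0:
  assumes a_sym: "\<And>i j. i < N \<Longrightarrow> j < N \<Longrightarrow> a i j = a j i"
  shows "(\<Sum>i<N. mask N a Am \<omega> i t) = 0"
proof -
  define g where "g = (\<lambda>i j. if a i j > 0 then sig Am \<omega> i j t else 0)"
  have m: "mask N a Am \<omega> i t = (\<Sum>j<N. g j i - g i j)" if "i < N" for i
  proof -
    have "mask N a Am \<omega> i t = (\<Sum>j\<in>{j. j < N \<and> a i j > 0}. sig Am \<omega> j i t - sig Am \<omega> i j t)"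
      by (simp add: mask_def nbrs_def)
    also have "\<dots> = (\<Sum>j\<in>{..<N}. if a i j > 0 then sig Am \<omega> j i t - sig Am \<omega> i j t else 0)"
      by (subst sum.inter_filter[symmetric]) (auto intro!: sum.cong)
    also have "\<dots> = (\<Sum>j<N. g j i - g i j)"
      using that by (intro sum.cong refl) (auto simp: g_def a_sym)
    finally show ?thesis .
  qed
  have "(\<Sum>i<N. mask N a Am \<omega> i t) = (\<Sum>i<N. \<Sum>j<N. g j i - g i j)"
    using m by simp
  also have "\<dots> = (\<Sum>i<N. \<Sum>j<N. g j i) - (\<Sum>i<N. \<Sum>j<N. g i j)"
    by (simp add: sum_subtractf)
  also have "(\<Sum>i<N. \<Sum>j<N. g j i) = (\<Sum>i<N. \<Sum>j<N. g i j)" by (rule sum.swap)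
  finally show ?thesis by simp
qed

definition md :: "nat \<Rightarrow> (nat \<Rightarrow> nat \<Rightarrow> real) \<Rightarrow> real \<Rightarrow> (nat \<Rightarrow> nat \<Rightarrow> real) \<Rightarrow> nat \<Rightarrow> real \<Rightarrow> real" where
  "md N a Am \<omega> i t = (\<Sum>j\<in>nbrs N a i. cos (\<omega> j i * t) * \<omega> j i * Am - cos (\<omega> i j * t) * \<omega> i j * Am)"

lemma mask_deriv: "(mask N a Am \<omega> i has_real_derivative md N a Am \<omega> i t) (at t)"
  unfolding mask_def[abs_def] md_def sig_def
  by (auto intro!: derivative_eq_intros)

lemma deriv_mask: "deriv (mask N a Am \<omega> i) t = md N a Am \<omega> i t"
  by (rule DERIV_imp_deriv[OF mask_deriv])

lemma md_bound: "\<bar>md N a Am \<omega> i t\<bar> \<le> (\<Sum>j\<in>nbrs N a i. \<bar>Am\<bar> * \<bar>\<omega> j i\<bar> + \<bar>Am\<bar> * \<bar>\<omega> i j\<bar>)"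
  unfolding md_def
proof (rule order_trans[OF sum_abs], rule sum_mono)
  have bnd: "\<bar>cos (w * t) * w * A\<bar> \<le> \<bar>A\<bar> * \<bar>w\<bar>" for w A :: real
  proof -
    have "\<bar>cos (w * t)\<bar> * \<bar>w\<bar> \<le> \<bar>w\<bar>" by (rule mult_left_le_one_le) simp_all
    hence "\<bar>cos (w * t)\<bar> * \<bar>w\<bar> * \<bar>A\<bar> \<le> \<bar>w\<bar> * \<bar>A\<bar>" by (rule mult_right_mono) simp
    thus ?thesis by (simp add: abs_mult mult.commute)
  qed
  fix j
  show "\<bar>cos (\<omega> j i * t) * \<omega> j i * Am - cos (\<omega> i j * t) * \<omega> i j * Am\<bar>
     \<le> \<bar>Am\<bar> * \<bar>\<omega> j i\<bar> + \<bar>Am\<bar> * \<bar>\<omega> i j\<bar>"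
    using bnd[of "\<omega> j i" Am] bnd[of "\<omega> i j" Am] by linarith
qed

lemma lap_sum0:
  fixes x :: "nat \<Rightarrow> real"
  assumes a_sym: "\<And>i j. i < N \<Longrightarrow> j < N \<Longrightarrow> a i j = a j i"
  shows "(\<Sum>i<N. \<Sum>j<N. a i j * (x i - x j)) = 0"
proof -
  have "(\<Sum>i<N. \<Sum>j<N. a i j * (x i - x j)) = (\<Sum>i<N. \<Sum>j<N. a i j * x i) - (\<Sum>i<N. \<Sum>j<N. a i j * x j)"
    by (simp add: sum_subtractf right_diff_distrib)
  also have "(\<Sum>i<N. \<Sum>j<N. a i j * x j) = (\<Sum>j<N. \<Sum>i<N. a i j * x j)" by (rule sum.swap)
  also have "\<dots> = (\<Sum>j<N. \<Sum>i<N. a j i * x j)" by (intro sum.cong refl) (simp add: a_sym)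
  finally show ?thesis by simp
qed

theorem theorem1:
  fixes N :: nat and a :: "nat \<Rightarrow> nat \<Rightarrow> real" and Am :: real
    and \<omega> :: "nat \<Rightarrow> nat \<Rightarrow> real"
    and z z' :: "nat \<Rightarrow> real \<Rightarrow> real"
  assumes N_pos: "0 < N"
    and a_sym: "\<And>i j. i < N \<Longrightarrow> j < N \<Longrightarrow> a i j = a j i"
    and a_nonneg: "\<And>i j. i < N \<Longrightarrow> j < N \<Longrightarrow> a i j \<ge> 0"
    and conn: "connected_graph N a"
    and Am_pos: "Am > 0"
    and z_deriv: "\<And>i t. i < N \<Longrightarrow> t \<ge> 0 \<Longrightarrow>
                    (z i has_real_derivative z' i t) (at t within {0..})"
    and z'_cont: "\<And>i. i < N \<Longrightarrow> continuous_on {0..} (z' i)"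
    and z'_bdd: "\<exists>B. \<forall>i<N. \<forall>t\<ge>0. \<bar>z' i t\<bar> \<le> B"
  shows "\<exists>c\<ge>0. \<forall>\<beta>>0. \<forall>zh :: nat \<Rightarrow> real \<Rightarrow> real.
           ((\<forall>i<N. zh i 0 = z i 0 + mask N a Am \<omega> i 0) \<and>
            (\<forall>i<N. \<forall>t\<ge>0. (zh i has_real_derivative
                (z' i t + deriv (mask N a Am \<omega> i) t
                 - \<beta> * (\<Sum>j<N. a i j * (zh i t - zh j t)))) (at t within {0..})))
           \<longrightarrow> (\<forall>i<N. Limsup at_top (\<lambda>t. ereal \<bar>zh i t - (\<Sum>j<N. z j t) / real N\<bar>)
                        \<le> ereal (c / \<beta>))"
proof -
  obtain l where l0: "l > 0" and lgap: "\<And>x::nat\<Rightarrow>real. (\<Sum>i<N. x i) = 0 \<Longrightarrow>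
           l * (\<Sum>i<N. (x i)^2) \<le> (\<Sum>i<N. x i * (\<Sum>j<N. a i j * (x i - x j)))"
    using gap[OF N_pos a_sym a_nonneg conn] by blast
  obtain B where B: "\<And>i t. i < N \<Longrightarrow> t \<ge> 0 \<Longrightarrow> \<bar>z' i t\<bar> \<le> B" using z'_bdd by blast
  define M where "M = (\<lambda>i. \<Sum>j\<in>nbrs N a i. \<bar>Am\<bar> * \<bar>\<omega> j i\<bar> + \<bar>Am\<bar> * \<bar>\<omega> i j\<bar>)"
  define U2 where "U2 = (\<Sum>i<N. (2 * \<bar>B\<bar> + M i)^2)"
  have U20: "U2 \<ge> 0" unfolding U2_def by (auto intro!: sum_nonneg)
  show ?thesis
  proof (intro exI[of _ "sqrt U2 / l"] conjI allI impI)
    show "0 \<le> sqrt U2 / l" using l0 U20 by simp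
    fix \<beta> :: real and zh :: "nat \<Rightarrow> real \<Rightarrow> real" and i :: nat
    assume \<beta>0: "\<beta> > 0" and i: "i < N"
    assume H: "(\<forall>i<N. zh i 0 = z i 0 + mask N a Am \<omega> i 0) \<and>
            (\<forall>i<N. \<forall>t\<ge>0. (zh i has_real_derivative
                (z' i t + deriv (mask N a Am \<omega> i) t
                 - \<beta> * (\<Sum>j<N. a i j * (zh i t - zh j t)))) (at t within {0..}))"
    have H0: "\<And>k. k < N \<Longrightarrow> zh k 0 = z k 0 + mask N a Am \<omega> k 0" using H by blast
    have HD: "\<And>k t. k < N \<Longrightarrow> t \<ge> 0 \<Longrightarrow> (zh k has_real_derivative
                (z' k t + md N a Am \<omega> k t - \<beta> * (\<Sum>j<N. a k j * (zh k t - zh j t)))) (at t within {0..})"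
      using H by (simp add: deriv_mask)
    define S where "S = (\<lambda>t. \<Sum>j<N. z j t)"
    define e where "e = (\<lambda>k t. zh k t - S t / real N)"
    define w where "w = (\<lambda>t. \<Sum>k<N. zh k t - z k t - mask N a Am \<omega> k t)"
    have wd: "(w has_real_derivative 0) (at t within {0..})" if t: "t \<ge> 0" for t
    proof -
      have "(w has_real_derivative (\<Sum>k<N. (z' k t + md N a Am \<omega> k t - \<beta> * (\<Sum>j<N. a k j * (zh k t - zh j t))) - z' k t - md N a Am \<omega> k t)) (at t within {0..})"
        unfolding w_def
        by (rule DERIV_sum) (intro DERIV_diff HD z_deriv mask_deriv[THEN has_field_derivative_at_within] t; simp)
      moreover have "(\<Sum>k<N. (z' k t + md N a Am \<omega> k t - \<beta> * (\<Sum>j<N. a k j * (zh k t - zh j t))) - z' k t - md N a Am \<omega> k t) = - \<beta> * (\<Sum>k<N. \<Sum>j<N. a k j * (zh k t - zh j t))"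
        by (simp add: sum_negf sum_distrib_left)
      moreover have "(\<Sum>k<N. \<Sum>j<N. a k j * (zh k t - zh j t)) = 0" by (rule lap_sum0[OF a_sym])
      ultimately show ?thesis by simp
    qed
    have w00: "w 0 = 0" unfolding w_def using H0 by simp
    have wconst: "w t = 0" if "t \<ge> 0" for t
    proof -
      have "w t \<le> w 0" by (rule decr0[OF wd]) (use that in auto)
      moreover have "(\<lambda>t. - w t) t \<le> (\<lambda>t. - w t) 0"
        by (rule decr0[where f'="\<lambda>_. 0"]) (use that wd in \<open>auto intro: DERIV_minus[where D=0, simplified]\<close>)
      ultimately show ?thesis using w00 by simp
    qed
    have esum: "(\<Sum>k<N. e k t) = 0" if "t \<ge> 0" for t
    proof -
      have "(\<Sum>k<N. zh k t) = S t + (\<Sum>k<N. mask N a Am \<omega> k t)"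
        using wconst[OF that] unfolding w_def S_def by (simp add: sum_subtractf)
      hence "(\<Sum>k<N. zh k t) = S t" using mask_sum0[OF a_sym] by simp
      thus ?thesis unfolding e_def using N_pos by (simp add: sum_subtractf)
    qed
    define u where "u = (\<lambda>k t. z' k t + md N a Am \<omega> k t - (\<Sum>j<N. z' j t) / real N)"
    define Le where "Le = (\<lambda>k t. \<Sum>j<N. a k j * (e k t - e j t))"
    have ed: "(e k has_real_derivative (u k t - \<beta> * Le k t)) (at t within {0..})"
      if k: "k < N" and t: "t \<ge> 0" for k t
    proof -
      have Sd: "(S has_real_derivative (\<Sum>j<N. z' j t)) (at t within {0..})"
        unfolding S_def by (rule DERIV_sum) (intro z_deriv t; simp)
      have "(e k has_real_derivative (z' k t + md N a Am \<omega> k t - \<beta> * (\<Sum>j<N. a k j * (zh k t - zh j t))) - (\<Sum>j<N. z' j t) / real N) (at t within {0..})"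
        unfolding e_def by (intro DERIV_diff HD DERIV_cdivide Sd k t)
      moreover have "Le k t = (\<Sum>j<N. a k j * (zh k t - zh j t))" unfolding Le_def e_def by simp
      ultimately show ?thesis unfolding u_def by (simp add: algebra_simps)
    qed
    have ubnd: "\<bar>u k t\<bar> \<le> 2 * \<bar>B\<bar> + M k" if k: "k < N" and t: "t \<ge> 0" for k t
    proof -
      have "\<bar>\<Sum>j<N. z' j t\<bar> \<le> (\<Sum>j<N. \<bar>B\<bar>)"
        by (rule order_trans[OF sum_abs], rule sum_mono) (use B t in force)
      hence "\<bar>(\<Sum>j<N. z' j t) / real N\<bar> \<le> \<bar>B\<bar>" using N_pos by (simp add: divide_le_eq mult.commute)
      moreover have "\<bar>md N a Am \<omega> k t\<bar> \<le> M k" unfolding M_def by (rule md_bound)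
      moreover have "\<bar>z' k t\<bar> \<le> \<bar>B\<bar>" using B[OF k t] by linarith
      ultimately show ?thesis unfolding u_def by linarith
    qed
    define V where "V = (\<lambda>t. \<Sum>k<N. (e k t)^2)"
    define bl where "bl = \<beta> * l"
    have bl0: "bl > 0" unfolding bl_def using \<beta>0 l0 by simp
    define R where "R = U2 / bl^2"
    define Vd where "Vd = (\<lambda>t. \<Sum>k<N. (u k t - \<beta> * Le k t) * e k t + (u k t - \<beta> * Le k t) * e k t)"
    have Vder: "(V has_real_derivative Vd t) (at t within {0..})" if t: "t \<ge> 0" for t
      unfolding V_def Vd_def power2_eq_square
      by (rule DERIV_sum) (intro DERIV_mult ed t; simp)
    have Vdb: "Vd t \<le> U2 / bl - bl * V t" if t: "t \<ge> 0" for t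
    proof -
      have "Vd t = (\<Sum>k<N. 2 * e k t * u k t - 2 * \<beta> * (e k t * Le k t))"
        unfolding Vd_def by (intro sum.cong refl) (simp add: algebra_simps)
      also have "\<dots> = (\<Sum>k<N. 2 * e k t * u k t) - 2 * \<beta> * (\<Sum>k<N. e k t * Le k t)"
        by (simp add: sum_subtractf sum_distrib_left)
      finally have "Vd t = (\<Sum>k<N. 2 * e k t * u k t) - 2 * \<beta> * (\<Sum>k<N. e k t * Le k t)" .
      moreover have "(\<Sum>k<N. 2 * e k t * u k t) \<le> (\<Sum>k<N. bl * (e k t)^2 + (2 * \<bar>B\<bar> + M k)^2 / bl)"
      proof (rule sum_mono)
        fix k assume "k \<in> {..<N}"
        hence "\<bar>u k t\<bar>^2 \<le> (2 * \<bar>B\<bar> + M k)^2" using ubnd[of k t] t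
          by (intro power_mono) auto
        hence ub: "(u k t)^2 \<le> (2 * \<bar>B\<bar> + M k)^2" by simp
        have "0 \<le> (bl * e k t - u k t)^2" by simp
        hence "2 * bl * (e k t * u k t) \<le> bl^2 * (e k t)^2 + (u k t)^2"
          by (simp add: power2_diff power_mult_distrib algebra_simps)
        moreover have "bl * (bl * (e k t)^2 + (u k t)^2 / bl) = bl^2 * (e k t)^2 + (u k t)^2"
          using bl0 by (simp add: distrib_left power2_eq_square)
        ultimately have "bl * (2 * (e k t * u k t)) \<le> bl * (bl * (e k t)^2 + (u k t)^2 / bl)"
          by (simp add: mult.assoc mult.left_commute)
        hence "2 * (e k t * u k t) \<le> bl * (e k t)^2 + (u k t)^2 / bl"
          using bl0 by (rule mult_left_le_imp_le)
        moreover have "(u k t)^2 / bl \<le> (2 * \<bar>B\<bar> + M k)^2 / bl"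
          using ub bl0 by (simp add: divide_right_mono)
        ultimately show "2 * e k t * u k t \<le> bl * (e k t)^2 + (2 * \<bar>B\<bar> + M k)^2 / bl" by simp
      qed
      moreover have "(\<Sum>k<N. bl * (e k t)^2 + (2 * \<bar>B\<bar> + M k)^2 / bl) = bl * V t + U2 / bl"
        unfolding V_def U2_def by (simp add: sum.distrib sum_distrib_left sum_divide_distrib)
      moreover have "l * V t \<le> (\<Sum>k<N. e k t * Le k t)"
        unfolding V_def Le_def using lgap[of "\<lambda>k. e k t"] esum[OF t] by simp
      hence "2 * \<beta> * (l * V t) \<le> 2 * \<beta> * (\<Sum>k<N. e k t * Le k t)" using \<beta>0 by simp
      moreover have "2 * \<beta> * (l * V t) = 2 * (bl * V t)" unfolding bl_def by simp
      ultimately show ?thesis by linarith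
    qed
    define \<phi> where "\<phi> = (\<lambda>t. exp (bl * t) * (V t - R))"
    have \<phi>d: "(\<phi> has_real_derivative (exp (bl * t) * bl * (V t - R) + exp (bl * t) * Vd t)) (at t within {0..})"
      if t: "t \<ge> 0" for t
      unfolding \<phi>_def
      by (rule DERIV_mult'[THEN DERIV_cong]) (auto intro!: derivative_eq_intros Vder t simp: algebra_simps)
    have \<phi>n: "exp (bl * t) * bl * (V t - R) + exp (bl * t) * Vd t \<le> 0" if t: "t \<ge> 0" for t
    proof -
      have "bl * R = U2 / bl" unfolding R_def using bl0 by (simp add: power2_eq_square)
      hence "bl * (V t - R) + Vd t \<le> 0"
        using Vdb[OF t] by (simp add: right_diff_distrib)
      hence "exp (bl * t) * (bl * (V t - R) + Vd t) \<le> 0" by (simp add: mult_nonneg_nonpos)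
      thus ?thesis by (simp add: algebra_simps)
    qed
    have Vbound: "V t \<le> R + exp (- (bl * t)) * (V 0 - R)" if t: "t \<ge> 0" for t
    proof -
      have "\<phi> t \<le> \<phi> 0" by (rule decr0[OF \<phi>d \<phi>n t])
      hence "exp (bl * t) * (V t - R) \<le> V 0 - R" unfolding \<phi>_def by simp
      hence "exp (- (bl * t)) * (exp (bl * t) * (V t - R)) \<le> exp (- (bl * t)) * (V 0 - R)"
        by (rule mult_left_mono) simp
      hence "V t - R \<le> exp (- (bl * t)) * (V 0 - R)"
        by (simp add: mult.assoc[symmetric] exp_add[symmetric])
      thus ?thesis by simp
    qed
    define g where "g = (\<lambda>t. sqrt (R + exp (- (bl * t)) * (V 0 - R)))"
    have ev: "eventually (\<lambda>t. ereal \<bar>zh i t - (\<Sum>j<N. z j t) / real N\<bar> \<le> ereal (g t)) at_top"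
      using eventually_ge_at_top[of "0::real"]
    proof eventually_elim
      case (elim t)
      have "(e i t)^2 \<le> V t" unfolding V_def
        by (rule member_le_sum[where f="\<lambda>k. (e k t)^2"]) (use i in auto)
      also have "\<dots> \<le> R + exp (- (bl * t)) * (V 0 - R)" by (rule Vbound[OF elim])
      finally have "sqrt ((e i t)^2) \<le> g t" unfolding g_def by (rule real_sqrt_le_mono)
      thus ?case unfolding e_def S_def by simp
    qed
    have "((\<lambda>t. exp (- (bl * t))) \<longlongrightarrow> 0) at_top"
      using bl0 by real_asymp
    hence "(g \<longlongrightarrow> sqrt (R + 0 * (V 0 - R))) at_top"
      unfolding g_def by (intro tendsto_intros)
    hence "((\<lambda>t. ereal (g t)) \<longlongrightarrow> ereal (sqrt R)) at_top" by simp
    hence "Limsup at_top (\<lambda>t. ereal (g t)) = ereal (sqrt R)"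
      by (intro lim_imp_Limsup) simp_all
    moreover have "sqrt R = sqrt U2 / l / \<beta>"
      unfolding R_def bl_def using \<beta>0 l0 by (simp add: real_sqrt_divide power_mult_distrib real_sqrt_mult)
    ultimately show "Limsup at_top (\<lambda>t. ereal \<bar>zh i t - (\<Sum>j<N. z j t) / real N\<bar>) \<le> ereal (sqrt U2 / l / \<beta>)"
      using Limsup_mono[OF ev] by simp
  qed
qed

end
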